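(* Let $V$ be a vertex algebra and let $M$ be a $\mathbb{C}$-subspace of $V$ with $C_2(V)\subseteq M$. Let $a\in V$. Then: (1) $a\in r_{0,-1}(M)$ if and only if $a+C_2(V)\in r(M/C_2(V))$; (2) $a\in sr_{0,-1}(M)$ if and only if $a+C_2(V)\in sr(M/C_2(V))$. Consequently, $M$ is an $MZ_{0,-1}$-subspace of $V$ if and only if $M/C_2(V)$ is a Mathieu-Zhao subspace of the commutative associative algebra $V/C_2(V)$.
   Context: A vertex algebra $(V,Y,\mathbf{1})$ is over $\mathbb{C}$; for $u\in V$ write $Y(u,z)=\sum_{n\in\mathbb{Z}}u_nz^{-n-1}$ with $u_n\in\operatorname{End}V$. Iterated products are nested to the right: $v_{n_1}v_{n_2}\cdots v_{n_t}v=v_{n_1}(v_{n_2}(\cdots(v_{n_t}v)))$. $C_2(V)=\operatorname{span}_{\mathbb{C}}\{u_{-2}v: u,v\in V\}$. The quotient $V/C_2(V)$ is a commutative associative unital algebra with product $(a+C_2(V))(b+C_2(V))=a_{-1}b+C_2(V)$ and identity $\mathbf{1}+C_2(V)$. For a subspace $M\subseteq V$: $r_{0,-1}(M)$ is the set of $v\in V$ for which there is $m\ge 0$ with $v_{n_1}\cdots v_{n_t}v\in M$ for all $t\ge m$ and all $n_1,\dots,n_t\in\{0,-1\}$. $lsr_{0,-1}(M)$ is the set of $v\in V$ such that for every $b\in V$ there is $m\ge0$ with $b_sv_{n_1}\cdots v_{n_t}v\in M$ for all $t\ge m$ and all $s,n_1,\dots,n_t\in\{0,-1\}$. $rsr_{0,-1}(M)$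 is the set of $v\in V$ such that for every $w\in V$ there is $m\ge 0$ with $(v_{n_1}\cdots v_{n_t}v)_nw\in M$ for all $t\ge m$ and all $n,n_1,\dots,n_t\in\{0,-1\}$. $sr_{0,-1}(M)=lsr_{0,-1}(M)\cap rsr_{0,-1}(M)$. $M$ is an $MZ_{0,-1}$-subspace of $V$ if $r_{0,-1}(M)=sr_{0,-1}(M)$. For a commutative associative unital algebra $A$ and a subspace $U$: $r(U)=\{a\in A:\exists m\ge1,\ a^t\in U\ \forall t\ge m\}$, $sr(U)=\{a\in A:\forall b,c\in A\ \exists m\ge 1,\ ba^tc\in U\ \forall t\ge m\}$; $U$ is a Mathieu-Zhao subspace of $A$ if $r(U)=sr(U)$. *)

theory Defs
  imports Complex_Main
begin

(* A vertex algebra over C is represented by: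
   - a type 'v with additive group structure and a scalar multiplication
     scale :: complex => 'v => 'v making it a C-vector space;
   - the modes  mode u n v = u_n v  (so Y(u,z) = sum_n u_n z^(-n-1));
   - the vacuum vector vac = 1. *)

definition fsum :: "(nat \<Rightarrow> 'v::comm_monoid_add) \<Rightarrow> 'v" where
  "fsum f = sum f {i. f i \<noteq> 0}"

definition int_sign :: "int \<Rightarrow> complex" where
  "int_sign n = (if even n then 1 else -1)"

definition is_vertex_algebra ::
  "(complex \<Rightarrow> 'v::ab_group_add \<Rightarrow> 'v) \<Rightarrow> ('v \<Rightarrow> int \<Rightarrow> 'v \<Rightarrow> 'v) \<Rightarrow> 'v \<Rightarrow> bool" where
  "is_vertex_algebra scale mode vac \<longleftrightarrow>
     vector_space scale \<and>
     \<comment> \<open>Y is linear: bilinearity of (u,v) |-> u_n v\<close>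
     (\<forall>n v. module_hom scale scale (\<lambda>u. mode u n v)) \<and>
     (\<forall>u n. module_hom scale scale (\<lambda>v. mode u n v)) \<and>
     \<comment> \<open>truncation: u_n v = 0 for n sufficiently large\<close>
     (\<forall>u v. \<exists>N. \<forall>n\<ge>N. mode u n v = 0) \<and>
     \<comment> \<open>vacuum: Y(1,z) = id\<close>
     (\<forall>v n. mode vac n v = (if n = -1 then v else 0)) \<and>
     \<comment> \<open>creation: Y(u,z)1 in V[[z]] with constant term u\<close>
     (\<forall>u n. n \<ge> 0 \<longrightarrow> mode u n vac = 0) \<and>
     (\<forall>u. mode u (-1) vac = u) \<and>
     \<comment> \<open>Jacobi identity, in its component form (Borcherds identity)\<close>
     (\<forall>u v w m n k.
        fsum (\<lambda>i. scale ((of_int m) gchoose i)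
                        (mode (mode u (n + int i) v) (m + k - int i) w))
      = fsum (\<lambda>i. scale ((-1) ^ i * ((of_int n) gchoose i))
                        (mode u (m + n - int i) (mode v (k + int i) w)
                         - scale (int_sign n) (mode v (n + k - int i) (mode u (m + int i) w)))))"

definition C2 :: "(complex \<Rightarrow> 'v::ab_group_add \<Rightarrow> 'v) \<Rightarrow> ('v \<Rightarrow> int \<Rightarrow> 'v \<Rightarrow> 'v) \<Rightarrow> 'v set" where
  "C2 scale mode = module.span scale {mode u (-2) v | u v. True}"

definition iter_mode :: "('v \<Rightarrow> int \<Rightarrow> 'v \<Rightarrow> 'v) \<Rightarrow> 'v \<Rightarrow> int list \<Rightarrow> 'v \<Rightarrow> 'v" where
  "iter_mode mode v ns w = foldr (\<lambda>n x. mode v n x) ns w"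

definition r01 :: "('v \<Rightarrow> int \<Rightarrow> 'v \<Rightarrow> 'v) \<Rightarrow> 'v set \<Rightarrow> 'v set" where
  "r01 mode M = {v. \<exists>m::nat. \<forall>ns. length ns \<ge> m \<and> set ns \<subseteq> {0, -1} \<longrightarrow>
                     iter_mode mode v ns v \<in> M}"

definition lsr01 :: "('v \<Rightarrow> int \<Rightarrow> 'v \<Rightarrow> 'v) \<Rightarrow> 'v set \<Rightarrow> 'v set" where
  "lsr01 mode M = {v. \<forall>b. \<exists>m::nat. \<forall>s ns. s \<in> {0, -1} \<and> length ns \<ge> m \<and> set ns \<subseteq> {0, -1} \<longrightarrow>
                     mode b s (iter_mode mode v ns v) \<in> M}"

definition rsr01 :: "('v \<Rightarrow> int \<Rightarrow> 'v \<Rightarrow> 'v) \<Rightarrow> 'v set \<Rightarrow> 'v set" where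
  "rsr01 mode M = {v. \<forall>w. \<exists>m::nat. \<forall>n ns. n \<in> {0, -1} \<and> length ns \<ge> m \<and> set ns \<subseteq> {0, -1} \<longrightarrow>
                     mode (iter_mode mode v ns v) n w \<in> M}"

definition sr01 :: "('v \<Rightarrow> int \<Rightarrow> 'v \<Rightarrow> 'v) \<Rightarrow> 'v set \<Rightarrow> 'v set" where
  "sr01 mode M = lsr01 mode M \<inter> rsr01 mode M"

definition MZ01_subspace :: "('v \<Rightarrow> int \<Rightarrow> 'v \<Rightarrow> 'v) \<Rightarrow> 'v set \<Rightarrow> bool" where
  "MZ01_subspace mode M \<longleftrightarrow> r01 mode M = sr01 mode M"

(* Commutative associative unital algebra given by carrier A, product mul, unit e *)
definition alg_pow :: "('a \<Rightarrow> 'a \<Rightarrow> 'a) \<Rightarrow> 'a \<Rightarrow> 'a \<Rightarrow> nat \<Rightarrow> 'a" where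
  "alg_pow mul e a t = (mul a ^^ t) e"

definition alg_r :: "'a set \<Rightarrow> ('a \<Rightarrow> 'a \<Rightarrow> 'a) \<Rightarrow> 'a \<Rightarrow> 'a set \<Rightarrow> 'a set" where
  "alg_r A mul e U = {a \<in> A. \<exists>m\<ge>1. \<forall>t\<ge>m. alg_pow mul e a t \<in> U}"

definition alg_sr :: "'a set \<Rightarrow> ('a \<Rightarrow> 'a \<Rightarrow> 'a) \<Rightarrow> 'a \<Rightarrow> 'a set \<Rightarrow> 'a set" where
  "alg_sr A mul e U = {a \<in> A. \<forall>b\<in>A. \<forall>c\<in>A. \<exists>m\<ge>1. \<forall>t\<ge>m. mul (mul b (alg_pow mul e a t)) c \<in> U}"

definition MZ_subspace :: "'a set \<Rightarrow> ('a \<Rightarrow> 'a \<Rightarrow> 'a) \<Rightarrow> 'a \<Rightarrow> 'a set \<Rightarrow> bool" where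
  "MZ_subspace A mul e U \<longleftrightarrow> alg_r A mul e U = alg_sr A mul e U"

definition coset :: "'v::ab_group_add set \<Rightarrow> 'v \<Rightarrow> 'v set" where
  "coset C a = (\<lambda>c. a + c) ` C"

definition quot :: "'v::ab_group_add set \<Rightarrow> 'v set set" where
  "quot C = range (coset C)"

(* product (a + C)(b + C) = a_{-1} b + C, via representatives *)
definition quot_mul :: "('v::ab_group_add \<Rightarrow> int \<Rightarrow> 'v \<Rightarrow> 'v) \<Rightarrow> 'v set \<Rightarrow> 'v set \<Rightarrow> 'v set \<Rightarrow> 'v set" where
  "quot_mul mode C X Y =
     coset C (mode (SOME a. X = coset C a) (-1) (SOME b. Y = coset C b))"

end

theory Submission
  imports Defs
begin

lemma fsum_single:
  assumes "\<And>i. i \<noteq> j \<Longrightarrow> f i = 0"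
  shows "fsum f = f j"
proof (cases "f j = 0")
  case True
  then have "\<forall>i. f i = 0" using assms by metis
  then have "{i. f i \<noteq> 0} = {}" by auto
  then show ?thesis using True by (simp add: fsum_def)
next
  case False
  then have "{i. f i \<noteq> 0} = {j}" using assms by auto
  then show ?thesis by (simp add: fsum_def)
qed

lemma fsum_finite:
  assumes "\<And>i. i \<ge> N \<Longrightarrow> f i = 0"
  shows "fsum f = sum f {..<N}"
proof -
  have "{i. f i \<noteq> 0} \<subseteq> {..<N}" using assms not_less by blast
  then show ?thesis unfolding fsum_def by (intro sum.mono_neutral_left) auto
qed

lemma gch0: "((0::complex) gchoose i) = (if i = 0 then 1 else 0)"
  by (simp add: gbinomial_0_left)

lemma gchm1: "((-1::complex) gchoose i) = (-1)^i"
proof -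
  have "((-1::complex) gchoose i) = (-1)^i * ((1 + of_nat i - 1) gchoose i)"
    using gbinomial_minus[of "1::complex" i] by simp
  also have "(1 + of_nat i - 1 :: complex) = of_nat i" by simp
  also have "((of_nat i::complex) gchoose i) = 1"
    by (metis binomial_gbinomial binomial_n_n of_nat_1)
  finally show ?thesis by simp
qed

lemma gchm2: "((-2::complex) gchoose i) = (-1)^i * (of_nat i + 1)"
proof -
  have "((-2::complex) gchoose i) = (-1)^i * ((2 + of_nat i - 1) gchoose i)"
    using gbinomial_minus[of "2::complex" i] by simp
  also have "(2 + of_nat i - 1 :: complex) = of_nat (Suc i)" by simp
  also have "((of_nat (Suc i)::complex) gchoose i) = of_nat (Suc i)"
    by (metis binomial_gbinomial binomial_Suc_n)
  finally show ?thesis by simp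
qed

locale VA =
  fixes scale :: "complex \<Rightarrow> 'v::ab_group_add \<Rightarrow> 'v"
    and mode :: "'v \<Rightarrow> int \<Rightarrow> 'v \<Rightarrow> 'v"
    and vac :: 'v
  assumes VA: "is_vertex_algebra scale mode vac"
begin

lemma vs: "vector_space scale" using VA by (simp add: is_vertex_algebra_def)

sublocale m: module scale using vs by (simp add: module_iff_vector_space)

lemma homL: "module_hom scale scale (\<lambda>u. mode u n v)" using VA by (simp add: is_vertex_algebra_def)
lemma homR: "module_hom scale scale (\<lambda>v. mode u n v)" using VA by (simp add: is_vertex_algebra_def)

lemma modeL_add: "mode (x + y) n w = mode x n w + mode y n w"
  using module_hom.add[OF homL] by metis
lemma modeL_diff: "mode (x - y) n w = mode x n w - mode y n w"
  using module_hom.diff[OF homL] by metis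
lemma modeL_zero[simp]: "mode 0 n w = 0"
  using module_hom.zero[OF homL] by metis
lemma modeL_scale: "mode (scale c x) n w = scale c (mode x n w)"
  using module_hom.scale[OF homL] by metis
lemma modeR_add: "mode u n (x + y) = mode u n x + mode u n y"
  using module_hom.add[OF homR] by metis
lemma modeR_diff: "mode u n (x - y) = mode u n x - mode u n y"
  using module_hom.diff[OF homR] by metis
lemma modeR_zero[simp]: "mode u n 0 = 0"
  using module_hom.zero[OF homR] by metis
lemma modeR_scale: "mode u n (scale c x) = scale c (mode u n x)"
  using module_hom.scale[OF homR] by metis

lemma trunc: "\<exists>N. \<forall>n\<ge>N. mode u n v = 0" using VA by (simp add: is_vertex_algebra_def)
lemma vac_mode: "mode vac n v = (if n = -1 then v else 0)" using VA by (simp add: is_vertex_algebra_def)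
lemma create0: "n \<ge> 0 \<Longrightarrow> mode u n vac = 0" using VA by (simp add: is_vertex_algebra_def)
lemma create1[simp]: "mode u (-1) vac = u" using VA by (simp add: is_vertex_algebra_def)

lemma borch: "fsum (\<lambda>i. scale ((of_int m) gchoose i)
                        (mode (mode u (n + int i) v) (m + k - int i) w))
      = fsum (\<lambda>i. scale ((-1) ^ i * ((of_int n) gchoose i))
                        (mode u (m + n - int i) (mode v (k + int i) w)
                         - scale (int_sign n) (mode v (n + k - int i) (mode u (m + int i) w))))"
  using VA unfolding is_vertex_algebra_def by blast

lemma trunc_nat: "\<exists>N::nat. \<forall>i\<ge>N. mode u (n + int i) v = 0"
proof -
  obtain N where N: "\<forall>n\<ge>N. mode u n v = 0" using trunc by blast
  show ?thesis
    by (rule exI[of _ "nat (N - n)"]) (auto intro!: N[rule_format])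
qed

abbreviation "C \<equiv> C2 scale mode"

lemma subC: "m.subspace C" unfolding C2_def by simp
lemma genC: "mode u (-2) v \<in> C" unfolding C2_def by (rule m.span_base) blast

lemma C_add: "x \<in> C \<Longrightarrow> y \<in> C \<Longrightarrow> x + y \<in> C" using m.subspace_add[OF subC] .
lemma C_diff: "x \<in> C \<Longrightarrow> y \<in> C \<Longrightarrow> x - y \<in> C" using m.subspace_diff[OF subC] .
lemma C_scale: "x \<in> C \<Longrightarrow> scale c x \<in> C" using m.subspace_scale[OF subC] .
lemma C_neg: "x \<in> C \<Longrightarrow> - x \<in> C" using m.subspace_neg[OF subC] .
lemma C_0: "0 \<in> C" using m.subspace_0[OF subC] .

lemma fsum_C: "(\<And>i. f i \<in> C) \<Longrightarrow> fsum f \<in> C"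
  unfolding fsum_def by (rule m.subspace_sum[OF subC]) auto

lemma low_step: "mode (mode u (-2) vac) (-2 - int d) w = scale (of_nat d + 2) (mode u (-3 - int d) w)"
proof -
  have L: "fsum (\<lambda>i. scale ((of_int 0) gchoose i)
                        (mode (mode u (-2 + int i) vac) (0 + (-2 - int d) - int i) w))
      = mode (mode u (-2) vac) (-2 - int d) w"
    by (subst fsum_single[where j=0]) (auto simp: gch0)
  have R: "fsum (\<lambda>i. scale ((-1) ^ i * ((of_int (-2)) gchoose i))
                        (mode u (0 + (-2) - int i) (mode vac ((-2 - int d) + int i) w)
                         - scale (int_sign (-2)) (mode vac ((-2) + (-2 - int d) - int i) (mode u (0 + int i) w))))
      = scale (of_nat d + 2) (mode u (-3 - int d) w)"
    apply (subst fsum_single[where j="Suc d"])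
     apply (auto simp: vac_mode)[1]
    apply (simp add: vac_mode gchm2 algebra_simps)
    apply (subgoal_tac "- int d - 3 = - 3 - int d")
     apply (simp only:)
    apply simp
    done
  show ?thesis using borch[of 0 u "-2" vac "-2 - int d" w] L R by simp
qed


lemma low_nat: "mode u (-2 - int d) w \<in> C"
proof (induction d arbitrary: u w)
  case 0 then show ?case using genC by simp
next
  case (Suc d)
  have "mode (mode u (-2) vac) (-2 - int d) w \<in> C" using Suc.IH .
  then have "scale (1 / (of_nat d + 2)) (mode (mode u (-2) vac) (-2 - int d) w) \<in> C" by (rule C_scale)
  moreover have nz: "(of_nat d + 2 :: complex) \<noteq> 0"
    by (metis add_2_eq_Suc' of_nat_eq_0_iff nat.distinct(1) of_nat_add of_nat_numeral)
  then have "scale (1 / (of_nat d + 2)) (mode (mode u (-2) vac) (-2 - int d) w) = mode u (-3 - int d) w"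
    unfolding low_step by simp
  moreover have "-2 - int (Suc d) = -3 - int d" by simp
  ultimately show ?case by simp
qed

lemma low: "k \<le> -2 \<Longrightarrow> mode u k w \<in> C"
  using low_nat[of u "nat (-2 - k)" w] by simp

lemma eq_C_trans: "fsum f = fsum g \<Longrightarrow> (\<And>i. f i \<in> C) \<Longrightarrow> (\<And>i. i \<noteq> j \<Longrightarrow> g i = 0) \<Longrightarrow> g j = z \<Longrightarrow> z \<in> C"
  using fsum_C fsum_single by metis

lemma eq_C_trans': "fsum f = fsum g \<Longrightarrow> (\<And>i. g i \<in> C) \<Longrightarrow> (\<And>i. i \<noteq> j \<Longrightarrow> f i = 0) \<Longrightarrow> f j = z \<Longrightarrow> z \<in> C"
  using fsum_C fsum_single by metis

lemma eq_single: "fsum f = fsum g \<Longrightarrow> (\<And>i. i \<noteq> j \<Longrightarrow> f i = 0) \<Longrightarrow> (\<And>i. i \<noteq> j' \<Longrightarrow> g i = 0) \<Longrightarrow> f j = x \<Longrightarrow> g j' = y \<Longrightarrow> x = y"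
  using fsum_single by metis

lemma fsum_modC:
  assumes "\<And>i. i \<noteq> j \<Longrightarrow> f i \<in> C" "f j - x \<in> C" "\<exists>N. \<forall>i\<ge>N. f i = 0"
  shows "fsum f - x \<in> C"
proof -
  obtain N where N: "\<forall>i\<ge>N. f i = 0" using assms(3) by blast
  define N' where "N' = max N (Suc j)"
  have "fsum f = sum f {..<N'}" by (rule fsum_finite) (use N N'_def in auto)
  also have "\<dots> = f j + sum f ({..<N'} - {j})"
    by (subst sum.remove[of _ j]) (auto simp: N'_def)
  finally have e: "fsum f - x = (f j - x) + sum f ({..<N'} - {j})" by (simp add: algebra_simps)
  have "sum f ({..<N'} - {j}) \<in> C"
    by (rule m.subspace_sum[OF subC]) (use assms(1) in auto)
  from C_add[OF assms(2) this] show ?thesis unfolding e .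
qed

lemma eq_modC: "fsum f = fsum g \<Longrightarrow> (\<And>i. i \<noteq> j \<Longrightarrow> f i \<in> C) \<Longrightarrow> f j - x \<in> C \<Longrightarrow> \<exists>N. \<forall>i\<ge>N. f i = 0
   \<Longrightarrow> (\<And>i. i \<noteq> j' \<Longrightarrow> g i \<in> C) \<Longrightarrow> g j' - y \<in> C \<Longrightarrow> \<exists>N. \<forall>i\<ge>N. g i = 0 \<Longrightarrow> x - y \<in> C"
proof -
  assume e: "fsum f = fsum g" and a: "\<And>i. i \<noteq> j \<Longrightarrow> f i \<in> C" "f j - x \<in> C" "\<exists>N. \<forall>i\<ge>N. f i = 0"
    and b: "\<And>i. i \<noteq> j' \<Longrightarrow> g i \<in> C" "g j' - y \<in> C" "\<exists>N. \<forall>i\<ge>N. g i = 0"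
  have "fsum f - x \<in> C" by (rule fsum_modC) (use a in auto)
  moreover have "fsum g - y \<in> C" by (rule fsum_modC) (use b in auto)
  ultimately have "(fsum f - x) - (fsum g - y) \<in> C" by (rule C_diff)
  then have "y - x \<in> C" using e by (simp add: algebra_simps)
  then have "- (y - x) \<in> C" by (rule C_neg)
  then show "x - y \<in> C" by simp
qed

lemma gen_modeR: "m \<le> 0 \<Longrightarrow> mode u m (mode x (-2) y) - mode x (-2) (mode u m y) \<in> C"
  apply (rule eq_C_trans[OF borch[of m u 0 x "-2" y], where j=0])
    apply (intro C_scale low, simp)
   apply (simp add: gch0)
  apply (simp add: int_sign_def)
  done

lemma modeR_C: assumes "m \<le> 0" "x \<in> C" shows "mode u m x \<in> C"
proof -
  have "m.span {mode u (- 2) v |u v. True} \<subseteq> (\<lambda>x. mode u m x) -` C"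
  proof (rule m.span_minimal)
    show "m.subspace ((\<lambda>x. mode u m x) -` C2 scale mode)"
      by (rule module_hom.subspace_vimage[OF homR subC])
    show "{mode u (- 2) v |u v. True} \<subseteq> (\<lambda>x. mode u m x) -` C2 scale mode"
    proof clarify
      fix a b
      have "(mode u m (mode a (-2) b) - mode a (-2) (mode u m b)) + mode a (-2) (mode u m b) \<in> C"
        by (rule C_add[OF gen_modeR[OF assms(1)] genC])
      then show "mode a (-2) b \<in> (\<lambda>x. mode u m x) -` C2 scale mode" by simp
    qed
  qed
  then show ?thesis using assms(2) unfolding C2_def by blast
qed

lemma gen_modeL: "j \<le> 0 \<Longrightarrow> mode (mode u (-2) v) j w \<in> C"
  apply (rule eq_C_trans'[OF borch[of 0 u "-2" v j w], where j=0])
    apply (intro C_scale C_diff low, simp, simp)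
   apply (simp add: gch0)
  apply simp
  done

lemma modeL_C: assumes "j \<le> 0" "x \<in> C" shows "mode x j w \<in> C"
proof -
  have "m.span {mode u (- 2) v |u v. True} \<subseteq> (\<lambda>x. mode x j w) -` C"
  proof (rule m.span_minimal)
    show "m.subspace ((\<lambda>x. mode x j w) -` C2 scale mode)"
      by (rule module_hom.subspace_vimage[OF homL subC])
    show "{mode u (- 2) v |u v. True} \<subseteq> (\<lambda>x. mode x j w) -` C2 scale mode"
      using gen_modeL[OF assms(1)] by auto
  qed
  then show ?thesis using assms(2) unfolding C2_def by blast
qed


lemma comm: "mode u (-1) v - mode v (-1) u \<in> C"
  apply (rule eq_modC[OF borch[of "-1" u "-1" v 0 vac], where j=0 and j'=0])
       apply (intro C_scale low, simp)
      apply (simp add: C_0)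
     apply (insert trunc_nat[of u "-1" v])[1]
     apply (elim exE, rule_tac x=N in exI, simp)
    apply (simp add: create0 C_0)
   apply (simp add: create0 C_0 int_sign_def)
  apply (rule exI[of _ 1], simp add: create0)
  done

lemma skew0: "mode u 0 v + mode v 0 u \<in> C"
proof -
  have "mode u 0 v - (- mode v 0 u) \<in> C"
  apply (rule eq_modC[OF borch[of "-1" u 0 v 0 vac], where j=0 and j'=0])
       apply (intro C_scale low, simp)
      apply (simp add: C_0)
     apply (insert trunc_nat[of u 0 v])[1]
     apply (elim exE, rule_tac x=N in exI, simp)
    apply (simp add: create0 C_0 gch0)
   apply (simp add: create0 C_0 int_sign_def)
  apply (rule exI[of _ 1], simp add: create0 gch0)
  done
  then show ?thesis by simp
qed

lemma assoc: "mode (mode u (-1) v) (-1) w - mode u (-1) (mode v (-1) w) \<in> C"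
  apply (rule eq_modC[OF borch[of 0 u "-1" v "-1" w], where j=0 and j'=0])
       apply (simp add: gch0 C_0)
      apply (simp add: C_0)
     apply (rule exI[of _ 1], simp add: gch0)
    apply (intro C_scale C_diff low, simp, simp)
   apply (simp add: int_sign_def genC)
  apply (insert trunc_nat[of v "-1" w] trunc_nat[of u 0 w])
  apply (elim exE, rule_tac x="max N Na" in exI, simp)
  done

lemma deriv0: "mode a 0 (mode u (-1) v) = mode (mode a 0 u) (-1) v + mode u (-1) (mode a 0 v)"
proof -
  have "mode (mode a 0 u) (-1) v = mode a 0 (mode u (-1) v) - mode u (-1) (mode a 0 v)"
    apply (rule eq_single[OF borch[of 0 a 0 u "-1" v], where j=0 and j'=0])
       apply (simp add: gch0)
      apply (simp add: gch0)
     apply simp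
    apply (simp add: int_sign_def)
    done
  then show ?thesis by (simp add: algebra_simps)
qed


lemma ctrans: "x - y \<in> C \<Longrightarrow> y - z \<in> C \<Longrightarrow> x - z \<in> C"
  using C_add[of "x - y" "y - z"] by simp
lemma csym: "x - y \<in> C \<Longrightarrow> y - x \<in> C"
  using C_neg[of "x - y"] by simp
lemma cadd: "x - x' \<in> C \<Longrightarrow> y - y' \<in> C \<Longrightarrow> (x + y) - (x' + y') \<in> C"
  using C_add[of "x - x'" "y - y'"] by (simp add: algebra_simps)
lemma cscale: "x - y \<in> C \<Longrightarrow> scale c x - scale c y \<in> C"
  using C_scale[of "x - y" c] by (simp add: m.scale_right_diff_distrib)
lemma crefl: "x - x \<in> C" using C_0 by simp
lemma cR: "n \<le> 0 \<Longrightarrow> x - y \<in> C \<Longrightarrow> mode u n x - mode u n y \<in> C"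
  using modeR_C[of n "x - y" u] by (simp add: modeR_diff)
lemma cL: "n \<le> 0 \<Longrightarrow> x - y \<in> C \<Longrightarrow> mode x n w - mode y n w \<in> C"
  using modeL_C[of n "x - y" w] by (simp add: modeL_diff)

lemma swap: "mode a (-1) (mode x (-1) y) - mode x (-1) (mode a (-1) y) \<in> C"
proof -
  have 1: "mode a (-1) (mode x (-1) y) - mode (mode a (-1) x) (-1) y \<in> C" by (rule csym[OF assoc])
  have 2: "mode (mode a (-1) x) (-1) y - mode (mode x (-1) a) (-1) y \<in> C" by (rule cL[OF _ comm]) simp
  show ?thesis by (rule ctrans[OF ctrans[OF 1 2] assoc])
qed

lemma swapR: "mode (mode b (-1) x) (-1) c - mode (mode b (-1) c) (-1) x \<in> C"
proof -
  have 2: "mode b (-1) (mode x (-1) c) - mode b (-1) (mode c (-1) x) \<in> C" by (rule cR[OF _ comm]) simp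
  show ?thesis by (rule ctrans[OF ctrans[OF assoc 2] csym[OF assoc]])
qed

definition Q :: "'v \<Rightarrow> nat \<Rightarrow> 'v" where "Q a t = ((\<lambda>x. mode a (-1) x) ^^ t) vac"
lemma Q0[simp]: "Q a 0 = vac" by (simp add: Q_def)
lemma QS[simp]: "Q a (Suc t) = mode a (-1) (Q a t)" by (simp add: Q_def)

lemma a0a: "mode a 0 a \<in> C"
proof -
  have "scale (1/2) (mode a 0 a + mode a 0 a) \<in> C" by (rule C_scale[OF skew0])
  moreover have "scale (1/2) (mode a 0 a + mode a 0 a) = mode a 0 a"
    using m.scale_left_distrib[of "1/2" "1/2" "mode a 0 a"] by (simp add: m.scale_right_distrib)
  ultimately show ?thesis by simp
qed

lemma a0Q: "mode a 0 (Q a (Suc t)) \<in> C"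
proof (induction t)
  case 0 then show ?case using a0a by simp
next
  case (Suc t)
  have "mode a 0 (Q a (Suc (Suc t))) = mode (mode a 0 a) (-1) (Q a (Suc t)) + mode a (-1) (mode a 0 (Q a (Suc t)))"
    by (simp add: deriv0)
  moreover have "mode (mode a 0 a) (-1) (Q a (Suc t)) \<in> C" by (rule modeL_C[OF _ a0a]) simp
  moreover have "mode a (-1) (mode a 0 (Q a (Suc t))) \<in> C" by (rule modeR_C[OF _ Suc.IH]) simp
  ultimately show ?case using C_add by simp
qed

lemma iterQ: "set ns \<subseteq> {0, -1} \<Longrightarrow>
   (0 \<in> set ns \<longrightarrow> iter_mode mode a ns a \<in> C) \<and> (0 \<notin> set ns \<longrightarrow> iter_mode mode a ns a = Q a (Suc (length ns)))"
proof (induction ns)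
  case Nil then show ?case by (simp add: iter_mode_def)
next
  case (Cons n ns)
  have e: "iter_mode mode a (n # ns) a = mode a n (iter_mode mode a ns a)" by (simp add: iter_mode_def)
  from Cons have IH: "(0 \<in> set ns \<longrightarrow> iter_mode mode a ns a \<in> C) \<and> (0 \<notin> set ns \<longrightarrow> iter_mode mode a ns a = Q a (Suc (length ns)))" by simp
  from Cons.prems have n: "n = 0 \<or> n = -1" by auto
  show ?case
  proof (cases "0 \<in> set ns")
    case True
    then have "mode a n (iter_mode mode a ns a) \<in> C" using IH n by (intro modeR_C) auto
    then show ?thesis using e True by simp
  next
    case False
    then have i: "iter_mode mode a ns a = Q a (Suc (length ns))" using IH by simp
    show ?thesis
    proof (cases "n = 0")
      case True then show ?thesis using e i a0Q by simp
    next
      case False2: False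
      then have "n = -1" using n by simp
      then show ?thesis using e i False False2 by simp
    qed
  qed
qed

lemma b0Q: "mode b 0 (Q a (Suc t)) - scale (of_nat (Suc t)) (mode (mode b 0 a) (-1) (Q a t)) \<in> C"
proof (induction t)
  case 0 then show ?case using crefl by simp
next
  case (Suc t)
  let ?x = "mode b 0 a"
  have e: "mode b 0 (Q a (Suc (Suc t))) = mode ?x (-1) (Q a (Suc t)) + mode a (-1) (mode b 0 (Q a (Suc t)))"
    by (simp add: deriv0)
  have 1: "mode a (-1) (mode b 0 (Q a (Suc t))) - mode a (-1) (scale (of_nat (Suc t)) (mode ?x (-1) (Q a t))) \<in> C"
    by (rule cR[OF _ Suc.IH]) simp
  have 2: "mode a (-1) (scale (of_nat (Suc t)) (mode ?x (-1) (Q a t))) - scale (of_nat (Suc t)) (mode ?x (-1) (Q a (Suc t))) \<in> C"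
    unfolding modeR_scale QS by (rule cscale[OF swap])
  have 3: "mode a (-1) (mode b 0 (Q a (Suc t))) - scale (of_nat (Suc t)) (mode ?x (-1) (Q a (Suc t))) \<in> C"
    by (rule ctrans[OF 1 2])
  have 4: "mode b 0 (Q a (Suc (Suc t))) - (mode ?x (-1) (Q a (Suc t)) + scale (of_nat (Suc t)) (mode ?x (-1) (Q a (Suc t)))) \<in> C"
    unfolding e by (rule cadd[OF crefl 3])
  have 5: "mode ?x (-1) (Q a (Suc t)) + scale (of_nat (Suc t)) (mode ?x (-1) (Q a (Suc t)))
     = scale (of_nat (Suc (Suc t))) (mode ?x (-1) (Q a (Suc t)))"
    using m.scale_left_distrib[of 1 "of_nat (Suc t)" "mode ?x (-1) (Q a (Suc t))"] by (simp add: add.commute)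
  show ?case using 4 unfolding 5 .
qed


abbreviation "q \<equiv> coset C"

lemma rep_sub: "set (replicate t (-1::int)) \<subseteq> {0, -1}"
  by (induct t) auto

lemma q_eq: "q x = q y \<longleftrightarrow> x - y \<in> C"
proof
  assume h: "q x = q y"
  have "x \<in> q x" unfolding coset_def using C_0 by (auto intro: image_eqI[of _ _ 0])
  then have "x \<in> q y" using h by simp
  then obtain c where "c \<in> C" "x = y + c" unfolding coset_def by auto
  then show "x - y \<in> C" by simp
next
  assume h: "x - y \<in> C"
  show "q x = q y"
  proof
    show "q x \<subseteq> q y"
    proof
      fix z assume "z \<in> q x"
      then obtain c where c: "c \<in> C" "z = x + c" unfolding coset_def by auto
      have "(x - y) + c \<in> C" using C_add[OF h c(1)] .
      moreover have "z = y + ((x - y) + c)" using c by simp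
      ultimately show "z \<in> q y" unfolding coset_def by (auto intro!: image_eqI[of _ _ "(x - y) + c"])
    qed
  next
    show "q y \<subseteq> q x"
    proof
      fix z assume "z \<in> q y"
      then obtain c where c: "c \<in> C" "z = y + c" unfolding coset_def by auto
      have "(y - x) + c \<in> C" using C_add[OF csym[OF h] c(1)] .
      moreover have "z = x + ((y - x) + c)" using c by simp
      ultimately show "z \<in> q x" unfolding coset_def by (auto intro!: image_eqI[of _ _ "(y - x) + c"])
    qed
  qed
qed

lemma qmul: "quot_mul mode C (q x) (q y) = q (mode x (-1) y)"
proof -
  define x' where "x' = (SOME a. q x = q a)"
  define y' where "y' = (SOME b. q y = q b)"
  have hx: "q x = q x'" unfolding x'_def by (rule someI[of _ x]) simp
  have hy: "q y = q y'" unfolding y'_def by (rule someI[of _ y]) simp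
  have "x' - x \<in> C" using hx q_eq by (metis csym)
  then have 1: "mode x' (-1) y' - mode x (-1) y' \<in> C" by (rule cL[rotated]) simp
  have "y' - y \<in> C" using hy q_eq by (metis csym)
  then have 2: "mode x (-1) y' - mode x (-1) y \<in> C" by (rule cR[rotated]) simp
  have "q (mode x' (-1) y') = q (mode x (-1) y)" using ctrans[OF 1 2] q_eq by blast
  then show ?thesis unfolding quot_mul_def x'_def[symmetric] y'_def[symmetric] .
qed

lemma qpow: "alg_pow (quot_mul mode C) (q vac) (q a) t = q (Q a t)"
proof (induction t)
  case 0 then show ?case by (simp add: alg_pow_def)
next
  case (Suc t)
  have "alg_pow (quot_mul mode C) (q vac) (q a) (Suc t) = quot_mul mode C (q a) (alg_pow (quot_mul mode C) (q vac) (q a) t)"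
    by (simp add: alg_pow_def)
  also have "\<dots> = q (Q a (Suc t))" unfolding Suc.IH qmul by simp
  finally show ?case .
qed

context
  fixes M assumes sub: "m.subspace M" and CM: "C \<subseteq> M"
begin

lemma qM: "q x \<in> q ` M \<longleftrightarrow> x \<in> M"
proof
  assume "q x \<in> q ` M"
  then obtain y where y: "y \<in> M" "q x = q y" by auto
  then have "x - y \<in> M" using q_eq CM by blast
  then have "(x - y) + y \<in> M" using m.subspace_add[OF sub _ y(1)] by blast
  then show "x \<in> M" by simp
qed auto

lemma Mcong: "x - y \<in> C \<Longrightarrow> y \<in> M \<Longrightarrow> x \<in> M"
  using m.subspace_add[OF sub, of "x - y" y] CM by auto

lemma M_scale: "x \<in> M \<Longrightarrow> scale c x \<in> M" using m.subspace_scale[OF sub] .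
lemma M_neg: "x \<in> M \<Longrightarrow> - x \<in> M" using m.subspace_neg[OF sub] .

lemma r01_iff: "a \<in> r01 mode M \<longleftrightarrow> (\<exists>m. \<forall>t\<ge>m. Q a (Suc t) \<in> M)"
proof
  assume "a \<in> r01 mode M"
  then obtain m where h: "\<forall>ns. length ns \<ge> m \<and> set ns \<subseteq> {0, -1} \<longrightarrow> iter_mode mode a ns a \<in> M"
    unfolding r01_def by blast
  have "Q a (Suc t) \<in> M" if "t \<ge> m" for t
    using h[rule_format, of "replicate t (-1)"] iterQ[of "replicate t (-1)" a] rep_sub[of t] that by auto
  then show "\<exists>m. \<forall>t\<ge>m. Q a (Suc t) \<in> M" by blast
next
  assume "\<exists>m. \<forall>t\<ge>m. Q a (Suc t) \<in> M"
  then obtain m where h: "\<forall>t\<ge>m. Q a (Suc t) \<in> M" by blast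
  have "iter_mode mode a ns a \<in> M" if "length ns \<ge> m" "set ns \<subseteq> {0, -1}" for ns
    using iterQ[OF that(2), of a] h that(1) CM by (cases "0 \<in> set ns") auto
  then show "a \<in> r01 mode M" unfolding r01_def by blast
qed

lemma lsr_iff: "a \<in> lsr01 mode M \<longleftrightarrow> (\<forall>b. \<exists>m. \<forall>t\<ge>m. mode b 0 (Q a (Suc t)) \<in> M \<and> mode b (-1) (Q a (Suc t)) \<in> M)"
proof
  assume "a \<in> lsr01 mode M"
  then have h: "\<forall>b. \<exists>m::nat. \<forall>s ns. s \<in> {0, -1} \<and> length ns \<ge> m \<and> set ns \<subseteq> {0, -1} \<longrightarrow>
                     mode b s (iter_mode mode a ns a) \<in> M" unfolding lsr01_def by blast
  show "\<forall>b. \<exists>m. \<forall>t\<ge>m. mode b 0 (Q a (Suc t)) \<in> M \<and> mode b (-1) (Q a (Suc t)) \<in> M"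
  proof
    fix b
    obtain m where hm: "\<forall>s ns. s \<in> {0, -1} \<and> length ns \<ge> m \<and> set ns \<subseteq> {0, -1} \<longrightarrow>
                     mode b s (iter_mode mode a ns a) \<in> M" using h by blast
    have "mode b 0 (Q a (Suc t)) \<in> M \<and> mode b (-1) (Q a (Suc t)) \<in> M" if "t \<ge> m" for t
      using hm[rule_format, of 0 "replicate t (-1)"] hm[rule_format, of "-1" "replicate t (-1)"]
        iterQ[of "replicate t (-1)" a] rep_sub[of t] that by auto
    then show "\<exists>m. \<forall>t\<ge>m. mode b 0 (Q a (Suc t)) \<in> M \<and> mode b (-1) (Q a (Suc t)) \<in> M" by blast
  qed
next
  assume h: "\<forall>b. \<exists>m. \<forall>t\<ge>m. mode b 0 (Q a (Suc t)) \<in> M \<and> mode b (-1) (Q a (Suc t)) \<in> M"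
  show "a \<in> lsr01 mode M" unfolding lsr01_def
  proof (intro CollectI allI)
    fix b
    obtain m where hm: "\<forall>t\<ge>m. mode b 0 (Q a (Suc t)) \<in> M \<and> mode b (-1) (Q a (Suc t)) \<in> M" using h by blast
    have "mode b s (iter_mode mode a ns a) \<in> M" if "s \<in> {0, -1}" "length ns \<ge> m" "set ns \<subseteq> {0, -1}" for s ns
    proof (cases "0 \<in> set ns")
      case True
      then have "iter_mode mode a ns a \<in> C" using iterQ[OF that(3), of a] by simp
      then have "mode b s (iter_mode mode a ns a) \<in> C" using that(1) by (intro modeR_C) auto
      then show ?thesis using CM by blast
    next
      case False
      then show ?thesis using iterQ[OF that(3), of a] hm that by auto
    qed
    then show "\<exists>m. \<forall>s ns. s \<in> {0, -1} \<and> length ns \<ge> m \<and> set ns \<subseteq> {0, -1} \<longrightarrow>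
                     mode b s (iter_mode mode a ns a) \<in> M" by blast
  qed
qed

lemma rsr_iff: "a \<in> rsr01 mode M \<longleftrightarrow> (\<forall>w. \<exists>m. \<forall>t\<ge>m. mode (Q a (Suc t)) 0 w \<in> M \<and> mode (Q a (Suc t)) (-1) w \<in> M)"
proof
  assume "a \<in> rsr01 mode M"
  then have h: "\<forall>w. \<exists>m::nat. \<forall>n ns. n \<in> {0, -1} \<and> length ns \<ge> m \<and> set ns \<subseteq> {0, -1} \<longrightarrow>
                     mode (iter_mode mode a ns a) n w \<in> M" unfolding rsr01_def by blast
  show "\<forall>w. \<exists>m. \<forall>t\<ge>m. mode (Q a (Suc t)) 0 w \<in> M \<and> mode (Q a (Suc t)) (-1) w \<in> M"
  proof
    fix w
    obtain m where hm: "\<forall>n ns. n \<in> {0, -1} \<and> length ns \<ge> m \<and> set ns \<subseteq> {0, -1} \<longrightarrow>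
                     mode (iter_mode mode a ns a) n w \<in> M" using h by blast
    have "mode (Q a (Suc t)) 0 w \<in> M \<and> mode (Q a (Suc t)) (-1) w \<in> M" if "t \<ge> m" for t
      using hm[rule_format, of 0 "replicate t (-1)"] hm[rule_format, of "-1" "replicate t (-1)"]
        iterQ[of "replicate t (-1)" a] rep_sub[of t] that by auto
    then show "\<exists>m. \<forall>t\<ge>m. mode (Q a (Suc t)) 0 w \<in> M \<and> mode (Q a (Suc t)) (-1) w \<in> M" by blast
  qed
next
  assume h: "\<forall>w. \<exists>m. \<forall>t\<ge>m. mode (Q a (Suc t)) 0 w \<in> M \<and> mode (Q a (Suc t)) (-1) w \<in> M"
  show "a \<in> rsr01 mode M" unfolding rsr01_def
  proof (intro CollectI allI)
    fix w
    obtain m where hm: "\<forall>t\<ge>m. mode (Q a (Suc t)) 0 w \<in> M \<and> mode (Q a (Suc t)) (-1) w \<in> M" using h by blast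
    have "mode (iter_mode mode a ns a) n w \<in> M" if "n \<in> {0, -1}" "length ns \<ge> m" "set ns \<subseteq> {0, -1}" for n ns
    proof (cases "0 \<in> set ns")
      case True
      then have "iter_mode mode a ns a \<in> C" using iterQ[OF that(3), of a] by simp
      then have "mode (iter_mode mode a ns a) n w \<in> C" using that(1) by (intro modeL_C) auto
      then show ?thesis using CM by blast
    next
      case False
      then show ?thesis using iterQ[OF that(3), of a] hm that by auto
    qed
    then show "\<exists>m. \<forall>n ns. n \<in> {0, -1} \<and> length ns \<ge> m \<and> set ns \<subseteq> {0, -1} \<longrightarrow>
                     mode (iter_mode mode a ns a) n w \<in> M" by blast
  qed
qed


lemma part1: "a \<in> r01 mode M \<longleftrightarrow> q a \<in> alg_r (quot C) (quot_mul mode C) (q vac) (q ` M)"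
proof -
  have "q a \<in> alg_r (quot C) (quot_mul mode C) (q vac) (q ` M) \<longleftrightarrow> (\<exists>m\<ge>1. \<forall>t\<ge>m. Q a t \<in> M)"
    unfolding alg_r_def quot_def by (simp add: qpow qM)
  also have "\<dots> \<longleftrightarrow> (\<exists>m. \<forall>t\<ge>m. Q a (Suc t) \<in> M)"
  proof
    assume "\<exists>m\<ge>1. \<forall>t\<ge>m. Q a t \<in> M"
    then obtain m where "\<forall>t\<ge>m. Q a t \<in> M" by blast
    then have "\<forall>t\<ge>m. Q a (Suc t) \<in> M" by (metis le_SucI)
    then show "\<exists>m. \<forall>t\<ge>m. Q a (Suc t) \<in> M" by blast
  next
    assume "\<exists>m. \<forall>t\<ge>m. Q a (Suc t) \<in> M"
    then obtain m where h: "\<forall>t\<ge>m. Q a (Suc t) \<in> M" by blast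
    have "\<forall>t\<ge>Suc m. Q a t \<in> M"
    proof (intro allI impI)
      fix t assume "Suc m \<le> t"
      then obtain t' where "t = Suc t'" "t' \<ge> m" by (cases t) auto
      then show "Q a t \<in> M" using h by simp
    qed
    then show "\<exists>m\<ge>1. \<forall>t\<ge>m. Q a t \<in> M" by (intro exI[of _ "Suc m"]) simp
  qed
  finally show ?thesis using r01_iff by simp
qed

lemma sr_S: "q a \<in> alg_sr (quot C) (quot_mul mode C) (q vac) (q ` M) \<longleftrightarrow>
   (\<forall>b c. \<exists>m\<ge>1. \<forall>t\<ge>m. mode (mode b (-1) (Q a t)) (-1) c \<in> M)"
  unfolding alg_sr_def quot_def by (simp add: qpow qM qmul)

lemma part2: "a \<in> sr01 mode M \<longleftrightarrow> q a \<in> alg_sr (quot C) (quot_mul mode C) (q vac) (q ` M)"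
proof
  assume "a \<in> sr01 mode M"
  then have L: "\<forall>b. \<exists>m. \<forall>t\<ge>m. mode b 0 (Q a (Suc t)) \<in> M \<and> mode b (-1) (Q a (Suc t)) \<in> M"
    unfolding sr01_def using lsr_iff by blast
  have "\<exists>m\<ge>1. \<forall>t\<ge>m. mode (mode b (-1) (Q a t)) (-1) c \<in> M" for b c
  proof -
    obtain m where hm: "\<forall>t\<ge>m. mode (mode b (-1) c) (-1) (Q a (Suc t)) \<in> M" using L by blast
    have "\<forall>t\<ge>Suc m. mode (mode b (-1) (Q a t)) (-1) c \<in> M"
    proof (intro allI impI)
      fix t assume "Suc m \<le> t"
      then obtain t' where t: "t = Suc t'" "t' \<ge> m" by (cases t) auto
      show "mode (mode b (-1) (Q a t)) (-1) c \<in> M"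
        by (rule Mcong[OF swapR]) (use hm t in simp)
    qed
    then show ?thesis by (intro exI[of _ "Suc m"]) simp
  qed
  then show "q a \<in> alg_sr (quot C) (quot_mul mode C) (q vac) (q ` M)" using sr_S by blast
next
  assume "q a \<in> alg_sr (quot C) (quot_mul mode C) (q vac) (q ` M)"
  then have S: "\<And>b c. \<exists>m\<ge>1. \<forall>t\<ge>m. mode (mode b (-1) (Q a t)) (-1) c \<in> M" using sr_S by blast
  have S1: "\<exists>m. \<forall>t\<ge>m. mode b (-1) (Q a t) \<in> M" for b
    using S[of b vac] by auto
  have A: "\<exists>m. \<forall>t\<ge>m. mode b 0 (Q a (Suc t)) \<in> M \<and> mode b (-1) (Q a (Suc t)) \<in> M" for b
  proof -
    obtain m1 where m1: "\<forall>t\<ge>m1. mode b (-1) (Q a t) \<in> M" using S1 by blast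
    obtain m2 where m2: "\<forall>t\<ge>m2. mode (mode b 0 a) (-1) (Q a t) \<in> M" using S1 by blast
    have "mode b 0 (Q a (Suc t)) \<in> M \<and> mode b (-1) (Q a (Suc t)) \<in> M" if "t \<ge> max m1 m2" for t
    proof
      show "mode b 0 (Q a (Suc t)) \<in> M"
        by (rule Mcong[OF b0Q M_scale]) (use m2 that in simp)
      show "mode b (-1) (Q a (Suc t)) \<in> M" using m1[rule_format, of "Suc t"] that by (simp del: QS)
    qed
    then show ?thesis by blast
  qed
  have B: "\<exists>m. \<forall>t\<ge>m. mode (Q a (Suc t)) 0 w \<in> M \<and> mode (Q a (Suc t)) (-1) w \<in> M" for w
  proof -
    obtain m where m: "\<forall>t\<ge>m. mode w 0 (Q a (Suc t)) \<in> M \<and> mode w (-1) (Q a (Suc t)) \<in> M" using A by blast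
    have "mode (Q a (Suc t)) 0 w \<in> M \<and> mode (Q a (Suc t)) (-1) w \<in> M" if "t \<ge> m" for t
    proof
      have "mode (Q a (Suc t)) 0 w - (- mode w 0 (Q a (Suc t))) \<in> C" using skew0 by simp
      then show "mode (Q a (Suc t)) 0 w \<in> M"
        by (rule Mcong) (rule M_neg, use m that in simp)
      show "mode (Q a (Suc t)) (-1) w \<in> M"
        by (rule Mcong[OF comm]) (use m that in simp)
    qed
    then show ?thesis by blast
  qed
  show "a \<in> sr01 mode M" unfolding sr01_def using lsr_iff rsr_iff A B by blast
qed

end

lemma main:
  assumes "m.subspace M" "C \<subseteq> M"
  shows "(a \<in> r01 mode M \<longleftrightarrow> q a \<in> alg_r (quot C) (quot_mul mode C) (q vac) (q ` M))
       \<and> (a \<in> sr01 mode M \<longleftrightarrow> q a \<in> alg_sr (quot C) (quot_mul mode C) (q vac) (q ` M))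
       \<and> (MZ01_subspace mode M \<longleftrightarrow> MZ_subspace (quot C) (quot_mul mode C) (q vac) (q ` M))"
proof (intro conjI)
  note P1 = part1[OF assms] and P2 = part2[OF assms]
  show "a \<in> r01 mode M \<longleftrightarrow> q a \<in> alg_r (quot C) (quot_mul mode C) (q vac) (q ` M)" by (rule P1)
  show "a \<in> sr01 mode M \<longleftrightarrow> q a \<in> alg_sr (quot C) (quot_mul mode C) (q vac) (q ` M)" by (rule P2)
  let ?R = "alg_r (quot C) (quot_mul mode C) (q vac) (q ` M)"
  let ?S = "alg_sr (quot C) (quot_mul mode C) (q vac) (q ` M)"
  have R: "?R \<subseteq> range q" unfolding alg_r_def quot_def by auto
  have S: "?S \<subseteq> range q" unfolding alg_sr_def quot_def by auto
  show "MZ01_subspace mode M \<longleftrightarrow> MZ_subspace (quot C) (quot_mul mode C) (q vac) (q ` M)"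
    unfolding MZ01_subspace_def MZ_subspace_def
  proof
    assume e: "r01 mode M = sr01 mode M"
    show "?R = ?S"
    proof (intro equalityI subsetI)
      fix X assume X: "X \<in> ?R"
      then obtain b where "X = q b" using R by blast
      then show "X \<in> ?S" using X P1[of b] P2[of b] e by auto
    next
      fix X assume X: "X \<in> ?S"
      then obtain b where "X = q b" using S by blast
      then show "X \<in> ?R" using X P1[of b] P2[of b] e by auto
    qed
  next
    assume e: "?R = ?S"
    show "r01 mode M = sr01 mode M" using P1 P2 e by blast
  qed
qed

end

theorem mainTheorem1:
  fixes scale :: "complex \<Rightarrow> 'v::ab_group_add \<Rightarrow> 'v"
    and mode :: "'v \<Rightarrow> int \<Rightarrow> 'v \<Rightarrow> 'v"
    and vac :: 'v
    and M :: "'v set"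
    and a :: 'v
  assumes VA: "is_vertex_algebra scale mode vac"
    and sub: "module.subspace scale M"
    and C2M: "C2 scale mode \<subseteq> M"
  shows "(a \<in> r01 mode M \<longleftrightarrow>
            coset (C2 scale mode) a
              \<in> alg_r (quot (C2 scale mode)) (quot_mul mode (C2 scale mode))
                      (coset (C2 scale mode) vac) (coset (C2 scale mode) ` M))
       \<and> (a \<in> sr01 mode M \<longleftrightarrow>
            coset (C2 scale mode) a
              \<in> alg_sr (quot (C2 scale mode)) (quot_mul mode (C2 scale mode))
                      (coset (C2 scale mode) vac) (coset (C2 scale mode) ` M))
       \<and> (MZ01_subspace mode M \<longleftrightarrow>
            MZ_subspace (quot (C2 scale mode)) (quot_mul mode (C2 scale mode))
                        (coset (C2 scale mode) vac) (coset (C2 scale mode) ` M))"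
proof -
  interpret V: VA scale mode vac by (rule VA.intro[OF VA])
  show ?thesis by (rule V.main[OF sub C2M])
qed

end
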